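(* Let $\mathcal{G}$ be a reaction network with species $X_1,\dots,X_n$ and reactions $\mathbf{y}\to\mathbf{y}'$ ($\mathbf{y},\mathbf{y}'\in\mathbb{Z}^n_{\ge 0}$, $\mathbf{y}\neq\mathbf{y}'$). For every choice of $n$ distinct reactions $\mathbf{y}_1\to\mathbf{y}'_1,\dots,\mathbf{y}_n\to\mathbf{y}'_n$ of $\mathcal{G}$ consider the number $$P=\det(\mathbf{y}_1,\dots,\mathbf{y}_n)\,\det(\mathbf{y}'_1-\mathbf{y}_1,\dots,\mathbf{y}'_n-\mathbf{y}_n),$$ where the determinants are of the $n\times n$ matrices with the indicated columns. Then $\mathcal{G}$ is injective if and only if all such numbers $P$ that are nonzero have the same sign and at least one of them is nonzero.
   Context: A reaction network with species $X_1,\dots,X_n$ is a finite set of reactions $\mathbf{y}\to\mathbf{y}'$ with $\mathbf{y}\ne\mathbf{y}'\in\mathbb{Z}^n_{\ge0}$ (the vectors of stoichiometric coefficients of reactants and products). Given rate constants $\mathbf{k}=(k_{\mathbf{y}\to\mathbf{y}'})$, all positive, the mass-action vector field is $\mathbf{f}(\mathbf{x},\mathbf{k})=\sum_{\mathbf{y}\to\mathbf{y}'}k_{\mathbf{y}\to\mathbf{y}'}\mathbf{x}^{\mathbf{y}}(\mathbf{y}'-\mathbf{y})$ for $\mathbf{x}\in\mathbb{R}^n_{>0}$, where $\mathbf{x}^{\mathbf{y}}=x_1^{y_1}\cdots x_n^{y_n}$. The network is called injective if for every choice of positive rate constants $\mathbf{k}$ the map $\mathbf{x}\mapsto\mathbf{f}(\mathbf{x},\mathbf{k})$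 is injective on $\mathbb{R}^n_{>0}$. *)

theory Defs
  imports "HOL-Analysis.Analysis"
begin

text \<open>Species are indexed by a finite type 'n (so n = CARD('n)). A complex is a
vector in nat ^ 'n; a reaction is a pair (y, y'); a reaction network is a finite
set of reactions with y \<noteq> y'.\<close>

type_synonym 'n complex = "nat ^ 'n"
type_synonym 'n reaction = "'n complex \<times> 'n complex"

definition reaction_network :: "'n::finite reaction set \<Rightarrow> bool" where
  "reaction_network G \<longleftrightarrow> finite G \<and> (\<forall>(y, y') \<in> G. y \<noteq> y')"

definition real_vec :: "nat ^ 'n::finite \<Rightarrow> real ^ 'n" where
  "real_vec y = (\<chi> i. real (y $ i))"

definition monom :: "real ^ 'n::finite \<Rightarrow> nat ^ 'n \<Rightarrow> real" where
  "monom x y = (\<Prod>i\<in>UNIV. (x $ i) ^ (y $ i))"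

definition mass_action ::
  "'n::finite reaction set \<Rightarrow> ('n reaction \<Rightarrow> real) \<Rightarrow> real ^ 'n \<Rightarrow> real ^ 'n" where
  "mass_action G k x = (\<Sum>r\<in>G. (k r * monom x (fst r)) *\<^sub>R (real_vec (snd r) - real_vec (fst r)))"

definition pos_orthant :: "(real ^ 'n::finite) set" where
  "pos_orthant = {x. \<forall>i. x $ i > 0}"

definition injective_network :: "'n::finite reaction set \<Rightarrow> bool" where
  "injective_network G \<longleftrightarrow>
     (\<forall>k. (\<forall>r\<in>G. k r > 0) \<longrightarrow> inj_on (mass_action G k) pos_orthant)"

definition cols_matrix :: "('n::finite \<Rightarrow> real ^ 'n) \<Rightarrow> real ^ 'n ^ 'n" where
  "cols_matrix v = (\<chi> j i. v i $ j)"

text \<open>For a choice of n distinct reactions (an injective map from the column index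
set into G), the number P = det(y_1..y_n) * det(y'_1 - y_1, .., y'_n - y_n).\<close>
definition det_product :: "('n::finite \<Rightarrow> 'n reaction) \<Rightarrow> real" where
  "det_product \<sigma> =
     det (cols_matrix (\<lambda>i. real_vec (fst (\<sigma> i)))) *
     det (cols_matrix (\<lambda>i. real_vec (snd (\<sigma> i)) - real_vec (fst (\<sigma> i))))"

end

theory Submission
  imports Defs
begin



lemma det_rows_sum_gen:
  assumes fS: "finite S" and fT: "finite T"
  shows "det ((\<chi> i. if i \<in> T then sum (a i) S else c i):: 'a::comm_ring_1^'n^'n) =
    sum (\<lambda>f. det((\<chi> i. if i \<in> T then a i (f i) else c i)::'a^'n^'n)) (PiE T (\<lambda>_. S))"
  using fT
proof (induct T arbitrary: a c set: finite)
  case empty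
  have th0: "\<And>x y. (\<chi> i. if i \<in> {} then x i else y i) = (\<chi> i. y i)"
    by vector
  show ?case unfolding th0 by simp
next
  case (insert z T a c)
  let ?h = "\<lambda>(y,g). g(z:=y)"
  let ?k = "\<lambda>h. (h z, h(z:=undefined))"
  have thif: "\<And>a b c d. (if a \<or> b then c else d) = (if a then c else if b then c else d)"
    by simp
  have thif2: "\<And>a b c d e. (if a then b else if c then d else e) =
     (if c then (if a then b else d) else (if a then b else e))"
    by simp
  from \<open>z \<notin> T\<close> have nz: "\<And>i. i \<in> T \<Longrightarrow> i \<noteq> z"
    by auto
  have "det (\<chi> i. if i \<in> insert z T then sum (a i) S else c i) =
    det (\<chi> i. if i = z then sum (a i) S else if i \<in> T then sum (a i) S else c i)"
    unfolding insert_iff thif ..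
  also have "\<dots> = (\<Sum>j\<in>S. det (\<chi> i. if i \<in> T then sum (a i) S else if i = z then a i j else c i))"
    unfolding det_linear_row_sum[OF fS]
    by (subst thif2) (simp add: nz cong: if_cong)
  finally have tha:
    "det (\<chi> i. if i \<in> insert z T then sum (a i) S else c i) =
     (\<Sum>(j, f)\<in>S \<times> PiE T (\<lambda>_. S). det (\<chi> i. if i \<in> T then a i (f i)
                                else if i = z then a i j
                                else c i))"
    unfolding insert.hyps unfolding sum.cartesian_product by blast
  show ?case unfolding tha
    using \<open>z \<notin> T\<close>
    by (intro sum.reindex_bij_witness[where i="?k" and j="?h"])
       (auto intro!: cong[OF refl[of det]] simp: vec_eq_iff PiE_def extensional_def)
qed

lemma det_rows_sum_univ:
  assumes fS: "finite S"
  shows "det ((\<chi> i. sum (a i) S):: 'a::comm_ring_1^'n::finite^'n) =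
    sum (\<lambda>f. det((\<chi> i. a i (f i))::'a^'n^'n)) {f. \<forall>i. f i \<in> S}"
proof -
  have "PiE (UNIV::'n set) (\<lambda>_. S) = {f. \<forall>j. f j \<in> S}" by (auto simp: PiE_def Pi_def extensional_def)
  thus ?thesis using det_rows_sum_gen[OF fS finite[of UNIV], where a=a and c="\<lambda>_. 0"] by simp
qed

definition Yv :: "'n::finite reaction \<Rightarrow> real^'n" where "Yv r = real_vec (fst r)"
definition Dv :: "'n::finite reaction \<Rightarrow> real^'n" where "Dv r = real_vec (snd r) - real_vec (fst r)"
definition Mk :: "'n::finite reaction set \<Rightarrow> ('n reaction \<Rightarrow> real) \<Rightarrow> real^'n^'n" where
  "Mk G \<kappa> = (\<chi> i j. \<Sum>r\<in>G. \<kappa> r * Dv r $ i * Yv r $ j)"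
definition InjS :: "'n::finite reaction set \<Rightarrow> ('n \<Rightarrow> 'n reaction) set" where
  "InjS G = {\<sigma>. inj \<sigma> \<and> range \<sigma> \<subseteq> G}"
definition Fk :: "'n::finite reaction set \<Rightarrow> (('n \<Rightarrow> 'n reaction) \<Rightarrow> real) \<Rightarrow> ('n reaction \<Rightarrow> real) \<Rightarrow> real" where
  "Fk G P \<kappa> = (\<Sum>\<sigma>\<in>InjS G. (\<Prod>j\<in>UNIV. \<kappa> (\<sigma> j)) * P \<sigma>)"

lemma finite_funs: "finite G \<Longrightarrow> finite {f::'n::finite \<Rightarrow> 'a. \<forall>j. f j \<in> G}"
proof -
  assume "finite G"
  hence "finite (PiE (UNIV::'n set) (\<lambda>_. G))" by (simp add: finite_PiE)
  moreover have "PiE (UNIV::'n set) (\<lambda>_. G) = {f. \<forall>j. f j \<in> G}" by (auto simp: PiE_def Pi_def extensional_def)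
  ultimately show ?thesis by simp
qed

lemma finite_InjS: "finite G \<Longrightarrow> finite (InjS G)"
  by (rule finite_subset[OF _ finite_funs[of G]]) (auto simp: InjS_def)

lemma transpose_cols: "transpose (cols_matrix v) = (\<chi> a. v a)"
  by (simp add: transpose_def cols_matrix_def vec_eq_iff)

lemma det_cols_perm:
  assumes p: "p permutes (UNIV::'n::finite set)"
  shows "det (cols_matrix (v \<circ> p)) = of_int (sign p) * det (cols_matrix (v :: 'n \<Rightarrow> real^'n))"
proof -
  have "cols_matrix (v \<circ> p) = (\<chi> i j. cols_matrix v $ i $ p j)"
    by (simp add: cols_matrix_def vec_eq_iff)
  thus ?thesis using det_permute_columns[OF p] by simp
qed

lemma det_expand:
  fixes G :: "'n::finite reaction set"
  assumes fin: "finite G"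
  shows "det (Mk G \<kappa>) = (\<Sum>f\<in>InjS G. (\<Prod>j\<in>UNIV. \<kappa> (f j) * Yv (f j) $ j) * det (cols_matrix (Dv \<circ> f)))"
proof -
  have "transpose (Mk G \<kappa>) = (\<chi> j. \<Sum>r\<in>G. (\<kappa> r * Yv r $ j) *s Dv r)"
    by (simp add: transpose_def Mk_def vec_eq_iff mult_ac)
  hence "det (Mk G \<kappa>) = det (\<chi> j. \<Sum>r\<in>G. (\<kappa> r * Yv r $ j) *s Dv r)"
    by (metis det_transpose)
  also have "\<dots> = (\<Sum>f\<in>{f. \<forall>j. f j \<in> G}. det (\<chi> j. (\<kappa> (f j) * Yv (f j) $ j) *s Dv (f j)))"
    by (rule det_rows_sum_univ[OF fin])
  also have "\<dots> = (\<Sum>f\<in>{f. \<forall>j. f j \<in> G}. (\<Prod>j\<in>UNIV. \<kappa> (f j) * Yv (f j) $ j) * det (cols_matrix (Dv \<circ> f)))"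
  proof (rule sum.cong[OF refl])
    fix f :: "'n \<Rightarrow> 'n reaction"
    have "(\<chi> j. Dv (f j)) = transpose (cols_matrix (Dv \<circ> f))"
      by (simp add: transpose_cols)
    thus "det (\<chi> j. (\<kappa> (f j) * Yv (f j) $ j) *s Dv (f j)) = (\<Prod>j\<in>UNIV. \<kappa> (f j) * Yv (f j) $ j) * det (cols_matrix (Dv \<circ> f))"
      by (simp add: det_rows_mul)
  qed
  also have "\<dots> = (\<Sum>f\<in>InjS G. (\<Prod>j\<in>UNIV. \<kappa> (f j) * Yv (f j) $ j) * det (cols_matrix (Dv \<circ> f)))"
  proof (rule sum.mono_neutral_right[OF finite_funs[OF fin]])
    show "InjS G \<subseteq> {f. \<forall>j. f j \<in> G}" by (auto simp: InjS_def)
    show "\<forall>f\<in>{f. \<forall>j. f j \<in> G} - InjS G. (\<Prod>j\<in>UNIV. \<kappa> (f j) * Yv (f j) $ j) * det (cols_matrix (Dv \<circ> f)) = 0"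
    proof
      fix f assume "f \<in> {f. \<forall>j. f j \<in> G} - InjS G"
      hence "\<not> inj f" by (auto simp: InjS_def)
      then obtain a b where ab: "a \<noteq> b" "f a = f b" by (auto simp: inj_def)
      have "det (transpose (cols_matrix (Dv \<circ> f))) = 0"
        by (rule det_identical_rows[OF ab(1)]) (simp add: transpose_cols row_def ab vec_eq_iff)
      thus "(\<Prod>j\<in>UNIV. \<kappa> (f j) * Yv (f j) $ j) * det (cols_matrix (Dv \<circ> f)) = 0" by simp
    qed
  qed
  finally show ?thesis .
qed


lemma perm_sum_f:
  fixes f :: "'n::finite \<Rightarrow> 'n reaction"
  shows "(\<Sum>p\<in>{p. p permutes (UNIV::'n set)}. (\<Prod>j\<in>UNIV. \<kappa> (f (p j)) * Yv (f (p j)) $ j) * det (cols_matrix (Dv \<circ> (f \<circ> p))))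
     = (\<Prod>j\<in>UNIV. \<kappa> (f j)) * det_product f"
proof -
  have "(\<Sum>p\<in>{p. p permutes (UNIV::'n set)}. (\<Prod>j\<in>UNIV. \<kappa> (f (p j)) * Yv (f (p j)) $ j) * det (cols_matrix (Dv \<circ> (f \<circ> p))))
     = (\<Sum>p\<in>{p. p permutes (UNIV::'n set)}. ((\<Prod>j\<in>UNIV. \<kappa> (f j)) * det (cols_matrix (Dv \<circ> f))) * (of_int (sign p) * (\<Prod>j\<in>UNIV. cols_matrix (Yv \<circ> f) $ j $ p j)))"
  proof (rule sum.cong[OF refl])
    fix p assume "p \<in> {p. p permutes (UNIV::'n set)}"
    hence p: "p permutes (UNIV::'n set)" by simp
    have 1: "(\<Prod>j\<in>UNIV. \<kappa> (f (p j))) = (\<Prod>j\<in>UNIV. \<kappa> (f j))"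
      using prod.permute[OF p, of "\<lambda>j. \<kappa> (f j)"] by (simp add: o_def)
    have 2: "det (cols_matrix (Dv \<circ> (f \<circ> p))) = of_int (sign p) * det (cols_matrix (Dv \<circ> f))"
      using det_cols_perm[OF p, of "Dv \<circ> f"] by (simp add: o_assoc)
    show "(\<Prod>j\<in>UNIV. \<kappa> (f (p j)) * Yv (f (p j)) $ j) * det (cols_matrix (Dv \<circ> (f \<circ> p))) =
         ((\<Prod>j\<in>UNIV. \<kappa> (f j)) * det (cols_matrix (Dv \<circ> f))) * (of_int (sign p) * (\<Prod>j\<in>UNIV. cols_matrix (Yv \<circ> f) $ j $ p j))"
      unfolding prod.distrib 1 2 by (simp add: cols_matrix_def mult_ac)
  qed
  also have "\<dots> = ((\<Prod>j\<in>UNIV. \<kappa> (f j)) * det (cols_matrix (Dv \<circ> f))) * det (cols_matrix (Yv \<circ> f))"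
    by (simp add: det_def sum_distrib_left)
  also have "\<dots> = (\<Prod>j\<in>UNIV. \<kappa> (f j)) * det_product f"
    by (simp add: det_product_def Yv_def Dv_def o_def mult_ac)
  finally show ?thesis .
qed

lemma det_expand2:
  fixes G :: "'n::finite reaction set"
  assumes fin: "finite G"
  shows "of_nat (card {p. p permutes (UNIV::'n set)}) * det (Mk G \<kappa>) = Fk G det_product \<kappa>"
proof -
  let ?P = "{p. p permutes (UNIV::'n set)}"
  let ?h = "\<lambda>f. (\<Prod>j\<in>UNIV. \<kappa> (f j) * Yv (f j) $ j) * det (cols_matrix (Dv \<circ> f))"
  have "of_nat (card ?P) * det (Mk G \<kappa>) = (\<Sum>p\<in>?P. \<Sum>f\<in>InjS G. ?h f)"
    by (simp add: det_expand[OF fin])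
  also have "\<dots> = (\<Sum>p\<in>?P. \<Sum>f\<in>InjS G. ?h (f \<circ> p))"
  proof (rule sum.cong[OF refl])
    fix p assume "p \<in> ?P"
    hence p: "p permutes (UNIV::'n set)" by simp
    show "(\<Sum>f\<in>InjS G. ?h f) = (\<Sum>f\<in>InjS G. ?h (f \<circ> p))"
    proof (rule sum.reindex_bij_witness[where i="\<lambda>f. f \<circ> inv p" and j="\<lambda>f. f \<circ> p", symmetric])
      fix f assume "f \<in> InjS G"
      show "f \<circ> p \<circ> inv p = f" using permutes_inverses(1)[OF p] by (auto simp: fun_eq_iff)
      show "f \<circ> p \<in> InjS G" using \<open>f \<in> InjS G\<close> permutes_inj[OF p]
        by (auto simp: InjS_def inj_compose)
      show "?h (f \<circ> p) = ?h (f \<circ> p)" ..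
    next
      fix f assume "f \<in> InjS G"
      show "f \<circ> inv p \<circ> p = f" using permutes_inverses(2)[OF p] by (auto simp: fun_eq_iff)
      have "inj (inv p)" using permutes_inv[OF p] permutes_inj by blast
      thus "f \<circ> inv p \<in> InjS G" using \<open>f \<in> InjS G\<close>
        by (auto simp: InjS_def inj_compose)
    qed
  qed
  also have "\<dots> = (\<Sum>f\<in>InjS G. \<Sum>p\<in>?P. ?h (f \<circ> p))"
    by (rule sum.swap)
  also have "\<dots> = Fk G det_product \<kappa>"
    unfolding Fk_def using perm_sum_f[of \<kappa>] by (simp add: o_def)
  finally show ?thesis .
qed


lemma det0: fixes A :: "real^'n^'n"
  shows "det A = 0 \<longleftrightarrow> (\<exists>x. x \<noteq> 0 \<and> A *v x = 0)"
proof -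
  have "det A \<noteq> 0 \<longleftrightarrow> inj ((*v) A)"
    using det_nz_iff_inj[of "(*v) A"] by (simp add: matrix_vector_mul_linear)
  moreover have "inj ((*v) A) \<longleftrightarrow> (\<forall>x. A *v x = 0 \<longrightarrow> x = 0)"
    by (simp add: linear_injective_0 matrix_vector_mul_linear)
  ultimately show ?thesis by blast
qed




lemma mvec: "Mk G \<kappa> *v w = (\<Sum>r\<in>G. (\<kappa> r * (\<Sum>j\<in>UNIV. Yv r $ j * w $ j)) *\<^sub>R Dv r)"
  by (simp add: vec_eq_iff Mk_def matrix_vector_mult_def sum_distrib_left sum_distrib_right
      mult_ac sum.swap[of _ G])

lemma madiff: "mass_action G k x - mass_action G k y =
   (\<Sum>r\<in>G. (k r * (monom x (fst r) - monom y (fst r))) *\<^sub>R Dv r)"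
  by (simp add: mass_action_def Dv_def sum_subtractf[symmetric] right_diff_distrib scaleR_left_diff_distrib)

lemma monom_exp: "(\<forall>i. x $ i > 0) \<Longrightarrow> monom x y = exp (\<Sum>i\<in>UNIV. real (y $ i) * ln (x $ i))"
  by (simp add: monom_def exp_sum ln_realpow[symmetric] exp_ln)

lemma Yv_comp: "Yv r $ j = real (fst r $ j)"
  by (simp add: Yv_def real_vec_def)

lemma exp_quot_pos: "(s::real) \<noteq> 0 \<Longrightarrow> (exp s - 1) / s > 0"
proof (cases "s > 0")
  case True thus ?thesis by (simp add: divide_pos_pos)
next
  case False assume "s \<noteq> 0" with False have "s < 0" by simp
  hence "exp s < 1" by simp
  thus ?thesis using \<open>s < 0\<close> by (simp add: divide_neg_neg)
qed

lemma noninj_sing: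
  fixes G :: "'n::finite reaction set" and a b :: "real^'n"
  assumes k: "\<forall>r\<in>G. k r > 0" and a: "a \<in> pos_orthant" and b: "b \<in> pos_orthant"
    and ab: "a \<noteq> b" and eq: "mass_action G k a = mass_action G k b"
  shows "\<exists>\<kappa>. (\<forall>r\<in>G. \<kappa> r > 0) \<and> det (Mk G \<kappa>) = 0"
proof -
  define w where "w = (\<chi> i. ln (a $ i) - ln (b $ i))"
  have ap: "\<forall>i. a $ i > 0" and bp: "\<forall>i. b $ i > 0" using a b by (auto simp: pos_orthant_def)
  have "w \<noteq> 0"
  proof
    assume "w = 0"
    hence "\<forall>i. ln (a $ i) = ln (b $ i)" by (auto simp: w_def vec_eq_iff)
    hence "a = b" using ap bp by (auto simp: vec_eq_iff)
    thus False using ab by simp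
  qed
  define s :: "'n reaction \<Rightarrow> real" where "s r = (\<Sum>j\<in>UNIV. Yv r $ j * w $ j)" for r
  define La :: "'n reaction \<Rightarrow> real" where "La r = (\<Sum>i\<in>UNIV. real (fst r $ i) * ln (a $ i))" for r
  define Lb :: "'n reaction \<Rightarrow> real" where "Lb r = (\<Sum>i\<in>UNIV. real (fst r $ i) * ln (b $ i))" for r
  have sL: "s r = La r - Lb r" for r
    by (simp add: s_def La_def Lb_def w_def Yv_comp sum_subtractf[symmetric] right_diff_distrib)
  define \<kappa> where "\<kappa> r = (if s r = 0 then 1 else k r * (exp (La r) - exp (Lb r)) / s r)" for r
  have kpos: "\<forall>r\<in>G. \<kappa> r > 0"
  proof
    fix r assume "r \<in> G"
    show "\<kappa> r > 0"
    proof (cases "s r = 0")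
      case False
      have ee: "exp (La r) - exp (Lb r) = exp (Lb r) * (exp (s r) - 1)"
        by (simp add: sL exp_diff right_diff_distrib)
      have "(exp (La r) - exp (Lb r)) / s r = exp (Lb r) * ((exp (s r) - 1) / s r)"
        by (simp add: ee)
      also have "\<dots> > 0" using exp_quot_pos[OF False] by (intro mult_pos_pos) auto
      finally have "0 < k r * ((exp (La r) - exp (Lb r)) / s r)" using k \<open>r \<in> G\<close> by (intro mult_pos_pos) auto
      thus ?thesis using False by (simp add: \<kappa>_def)
    qed (simp add: \<kappa>_def)
  qed
  have ks: "\<kappa> r * s r = k r * (monom a (fst r) - monom b (fst r))" for r
    using sL[of r] by (auto simp: \<kappa>_def monom_exp[OF ap] monom_exp[OF bp] La_def Lb_def)
  have "Mk G \<kappa> *v w = mass_action G k a - mass_action G k b"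
    unfolding mvec madiff using ks by (simp add: s_def)
  hence "Mk G \<kappa> *v w = 0" using eq by simp
  hence "det (Mk G \<kappa>) = 0" using det0 \<open>w \<noteq> 0\<close> by blast
  thus ?thesis using kpos by blast
qed

lemma sing_noninj:
  fixes G :: "'n::finite reaction set"
  assumes kp: "\<forall>r\<in>G. \<kappa> r > 0" and d: "det (Mk G \<kappa>) = 0"
  shows "\<exists>k. (\<forall>r\<in>G. k r > 0) \<and> \<not> inj_on (mass_action G k) pos_orthant"
proof -
  obtain w where w: "w \<noteq> 0" "Mk G \<kappa> *v w = 0" using d det0 by blast
  define a where "a = (\<chi> i. exp (w $ i))"
  define b :: "real^'n" where "b = (\<chi> i. 1)"
  define s :: "'n reaction \<Rightarrow> real" where "s r = (\<Sum>j\<in>UNIV. Yv r $ j * w $ j)" for r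
  define k where "k r = (if s r = 0 then 1 else \<kappa> r * s r / (exp (s r) - 1))" for r
  have ap: "\<forall>i. a $ i > 0" and bp: "\<forall>i. b $ i > 0" by (auto simp: a_def b_def)
  have ma: "monom a (fst r) = exp (s r)" for r
    unfolding monom_exp[OF ap] by (simp add: s_def a_def Yv_comp mult_ac)
  have mb: "monom b (fst r) = 1" for r
    by (simp add: monom_def b_def)
  have kpos: "\<forall>r\<in>G. k r > 0"
  proof
    fix r assume r: "r \<in> G"
    show "k r > 0"
    proof (cases "s r = 0")
      case False
      have "\<kappa> r * s r / (exp (s r) - 1) = \<kappa> r / ((exp (s r) - 1) / s r)"
        using False by (simp add: field_simps)
      also have "\<dots> > 0" using kp r exp_quot_pos[OF False] by (metis divide_pos_pos)
      finally show ?thesis using False by (simp add: k_def)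
    qed (simp add: k_def)
  qed
  have ks: "k r * (monom a (fst r) - monom b (fst r)) = \<kappa> r * s r" for r
  proof (cases "s r = 0")
    case False
    hence "exp (s r) - 1 \<noteq> 0" by simp
    thus ?thesis using False by (simp add: k_def ma mb)
  qed (simp add: ma mb)
  have "mass_action G k a - mass_action G k b = Mk G \<kappa> *v w"
    unfolding mvec madiff using ks by (simp add: s_def)
  hence eq: "mass_action G k a = mass_action G k b" using w by simp
  have "a \<noteq> b"
  proof
    assume "a = b"
    hence "\<forall>i. exp (w $ i) = 1" by (auto simp: a_def b_def vec_eq_iff)
    hence "w = 0" by (simp add: vec_eq_iff)
    thus False using w by simp
  qed
  moreover have "a \<in> pos_orthant" "b \<in> pos_orthant" using ap bp by (auto simp: pos_orthant_def)
  ultimately show ?thesis using eq kpos by (auto simp: inj_on_def)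
qed

lemma inj_iff_det:
  fixes G :: "'n::finite reaction set"
  shows
  "injective_network G \<longleftrightarrow> (\<forall>\<kappa>. (\<forall>r\<in>G. \<kappa> r > 0) \<longrightarrow> det (Mk G \<kappa>) \<noteq> 0)"
proof
  assume inj: "injective_network G"
  show "\<forall>\<kappa>. (\<forall>r\<in>G. \<kappa> r > 0) \<longrightarrow> det (Mk G \<kappa>) \<noteq> 0"
  proof (intro allI impI notI)
    fix \<kappa> assume "\<forall>r\<in>G. \<kappa> r > 0" "det (Mk G \<kappa>) = 0"
    from sing_noninj[OF this] obtain k where "\<forall>r\<in>G. k r > 0" "\<not> inj_on (mass_action G k) pos_orthant" by blast
    thus False using inj unfolding injective_network_def by blast
  qed
next
  assume h: "\<forall>\<kappa>. (\<forall>r\<in>G. \<kappa> r > 0) \<longrightarrow> det (Mk G \<kappa>) \<noteq> 0"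
  show "injective_network G"
    unfolding injective_network_def
  proof (intro allI impI)
    fix k :: "'n reaction \<Rightarrow> real" assume k: "\<forall>r\<in>G. k r > 0"
    show "inj_on (mass_action G k) pos_orthant"
    proof (rule inj_onI, rule ccontr)
      fix a b assume "a \<in> pos_orthant" "b \<in> pos_orthant" "mass_action G k a = mass_action G k b" "a \<noteq> b"
      from noninj_sing[OF k this(1,2,4,3)] h show False by blast
    qed
  qed
qed




lemma dp_alt: "det_product f = det (cols_matrix (Yv \<circ> f)) * det (cols_matrix (Dv \<circ> f))"
  by (simp add: det_product_def Yv_def Dv_def o_def)

lemma dp_inv:
  fixes \<sigma> f :: "'n::finite \<Rightarrow> 'n reaction"
  assumes s: "inj \<sigma>" and f: "inj f" and r: "range f = range \<sigma>"
  shows "det_product f = det_product \<sigma>"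
proof -
  define p where "p = inv \<sigma> \<circ> f"
  have fp: "f = \<sigma> \<circ> p"
  proof
    fix x have "f x \<in> range \<sigma>" using r by auto
    thus "f x = (\<sigma> \<circ> p) x" by (simp add: p_def f_inv_into_f)
  qed
  have "inj p"
  proof (rule injI)
    fix x y assume "p x = p y"
    hence "f x = f y" using fp by (simp add: o_def)
    thus "x = y" using f by (simp add: inj_eq)
  qed
  hence "bij p" using finite_UNIV_inj_surj[of p] by (simp add: bij_def)
  hence p: "p permutes (UNIV::'n set)" by (intro bij_imp_permutes) auto
  have "det_product f = (of_int (sign p) * of_int (sign p)) * det_product \<sigma>"
    using det_cols_perm[OF p, of "Yv \<circ> \<sigma>"] det_cols_perm[OF p, of "Dv \<circ> \<sigma>"]
    by (simp add: dp_alt fp mult_ac o_assoc)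
  also have "of_int (sign p) * of_int (sign p) = (1::real)"
    by (metis of_int_1 of_int_mult sign_idempotent)
  finally show ?thesis by simp
qed

lemma card_range_inj: "inj (f :: 'n::finite \<Rightarrow> 'b) \<Longrightarrow> card (range f) = CARD('n)"
  by (simp add: card_image)

lemma pos_witness:
  fixes G :: "'n::finite reaction set" and P :: "('n \<Rightarrow> 'n reaction) \<Rightarrow> real"
  assumes fin: "finite G" and sI: "\<sigma> \<in> InjS G" and Ps: "P \<sigma> > 0"
    and inv: "\<forall>f\<in>InjS G. range f = range \<sigma> \<longrightarrow> P f = P \<sigma>"
  shows "\<exists>\<kappa>. (\<forall>r\<in>G. \<kappa> r > 0) \<and> Fk G P \<kappa> > 0"
proof -
  let ?I = "InjS G"
  have finI: "finite ?I" using finite_InjS[OF fin] .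
  define S where "S = range \<sigma>"
  define B where "B = (\<Sum>f\<in>?I. \<bar>P f\<bar>)"
  have B0: "B \<ge> 0" unfolding B_def by (intro sum_nonneg) auto
  define \<epsilon> where "\<epsilon> = P \<sigma> / (2 * (B + P \<sigma>))"
  have e0: "\<epsilon> > 0" using Ps B0 by (simp add: \<epsilon>_def)
  have e1: "\<epsilon> \<le> 1" using Ps B0 by (simp add: \<epsilon>_def field_simps)
  have eB: "\<epsilon> * B < P \<sigma>"
  proof -
    have "\<epsilon> * B = P \<sigma> * B / (2 * (B + P \<sigma>))" by (simp add: \<epsilon>_def)
    also have "\<dots> < P \<sigma>" using Ps B0 by (simp add: field_simps) (smt (verit) mult_nonneg_nonneg mult_pos_pos)
    finally show ?thesis .
  qed
  define \<kappa> where "\<kappa> r = (if r \<in> S then 1 else \<epsilon>)" for r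
  have kp: "\<kappa> r > 0" for r using e0 by (simp add: \<kappa>_def)
  have k1: "\<kappa> r \<le> 1" for r using e1 by (simp add: \<kappa>_def)
  have low: "(\<Prod>j\<in>UNIV. \<kappa> (f j)) * P f \<ge> (if f = \<sigma> then P \<sigma> else - \<epsilon> * \<bar>P f\<bar>)" if fI: "f \<in> ?I" for f
  proof (cases "range f = S")
    case True
    hence "(\<Prod>j\<in>UNIV. \<kappa> (f j)) = 1" by (auto simp: \<kappa>_def intro!: prod.neutral)
    moreover have "P f = P \<sigma>" using inv fI True by (simp add: S_def)
    ultimately have eq: "(\<Prod>j\<in>UNIV. \<kappa> (f j)) * P f = P \<sigma>" "\<bar>P f\<bar> = P \<sigma>" using Ps by auto
    have "0 < \<epsilon> * P \<sigma>" using Ps e0 by simp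
    hence "- \<epsilon> * \<bar>P f\<bar> \<le> (\<Prod>j\<in>UNIV. \<kappa> (f j)) * P f" unfolding eq using Ps by linarith
    thus ?thesis using eq by (cases "f = \<sigma>") auto
  next
    case False
    have "\<not> range f \<subseteq> S"
    proof
      assume sub: "range f \<subseteq> S"
      have "card (range f) = card S" using fI sI card_range_inj[of f] card_range_inj[of \<sigma>] by (simp add: InjS_def S_def)
      hence "range f = S" using card_subset_eq[OF _ sub] by (simp add: S_def)
      thus False using False by simp
    qed
    then obtain j0 where j0: "f j0 \<notin> S" by (auto simp: image_subset_iff)
    have "(\<Prod>j\<in>UNIV. \<kappa> (f j)) = \<kappa> (f j0) * (\<Prod>j\<in>UNIV - {j0}. \<kappa> (f j))"
      by (simp add: prod.remove)
    also have "\<dots> \<le> \<epsilon> * 1"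
    proof -
      have kj0: "\<kappa> (f j0) = \<epsilon>" using j0 by (simp add: \<kappa>_def)
      have "(\<Prod>j\<in>UNIV - {j0}. \<kappa> (f j)) \<le> 1" by (intro prod_le_1) (auto simp: k1 kp less_imp_le)
      moreover have "0 \<le> (\<Prod>j\<in>UNIV - {j0}. \<kappa> (f j))" by (intro prod_nonneg) (auto simp: kp less_imp_le)
      ultimately show ?thesis unfolding kj0 using e0 by (intro mult_mono) auto
    qed
    finally have Pl: "(\<Prod>j\<in>UNIV. \<kappa> (f j)) \<le> \<epsilon>" by simp
    have Pp: "(\<Prod>j\<in>UNIV. \<kappa> (f j)) > 0" using kp by (intro prod_pos) auto
    have "- \<epsilon> * \<bar>P f\<bar> \<le> - (\<Prod>j\<in>UNIV. \<kappa> (f j)) * \<bar>P f\<bar>"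
      using Pl by (simp add: mult_right_mono)
    also have "\<dots> \<le> (\<Prod>j\<in>UNIV. \<kappa> (f j)) * P f"
    proof -
      have "(\<Prod>j\<in>UNIV. \<kappa> (f j)) * (- \<bar>P f\<bar>) \<le> (\<Prod>j\<in>UNIV. \<kappa> (f j)) * P f"
        by (rule mult_left_mono) (use Pp in auto)
      thus ?thesis by simp
    qed
    finally show ?thesis using False by (auto simp: S_def)
  qed
  have c1: "Fk G P \<kappa> \<ge> (\<Sum>f\<in>?I. (if f = \<sigma> then P \<sigma> else - \<epsilon> * \<bar>P f\<bar>))"
    unfolding Fk_def by (intro sum_mono low)
  have c2: "(\<Sum>f\<in>?I. (if f = \<sigma> then P \<sigma> else - \<epsilon> * \<bar>P f\<bar>)) = P \<sigma> - \<epsilon> * (\<Sum>f\<in>?I - {\<sigma>}. \<bar>P f\<bar>)"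
    by (simp add: sum.remove[OF finI sI] sum_distrib_left sum_negf)
  have c3: "(\<Sum>f\<in>?I - {\<sigma>}. \<bar>P f\<bar>) \<le> B"
    unfolding B_def by (intro sum_mono2 finI) auto
  have "\<epsilon> * (\<Sum>f\<in>?I - {\<sigma>}. \<bar>P f\<bar>) \<le> \<epsilon> * B" using c3 e0 by (simp add: mult_left_mono)
  hence "Fk G P \<kappa> > 0" using c1 c2 eB by linarith
  thus ?thesis using kp by blast
qed




lemma Fk_neg: "Fk G (\<lambda>f. - P f) \<kappa> = - Fk G P \<kappa>"
  by (simp add: Fk_def sum_negf)

lemma prod_kpos: "\<forall>r\<in>G. \<kappa> r > 0 \<Longrightarrow> f \<in> InjS G \<Longrightarrow> (\<Prod>j\<in>UNIV. \<kappa> (f j)) > (0::real)"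
  by (intro prod_pos) (auto simp: InjS_def)

lemma pos_all:
  fixes G :: "'n::finite reaction set"
  assumes fin: "finite G" and s: "\<sigma> \<in> InjS G" and Ps: "P \<sigma> > 0" and nn: "\<forall>f\<in>InjS G. P f \<ge> 0"
    and kp: "\<forall>r\<in>G. \<kappa> r > 0"
  shows "Fk G P \<kappa> > 0"
proof -
  have nn2: "\<forall>f\<in>InjS G. 0 \<le> (\<Prod>j\<in>UNIV. \<kappa> (f j)) * P f"
    using prod_kpos[OF kp] nn by (metis less_imp_le mult_nonneg_nonneg)
  have "0 < (\<Prod>j\<in>UNIV. \<kappa> (\<sigma> j)) * P \<sigma>" using prod_kpos[OF kp s] Ps by simp
  also have "\<dots> \<le> Fk G P \<kappa>" unfolding Fk_def
    using nn2 finite_InjS[OF fin] s by (intro member_le_sum) auto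
  finally show ?thesis .
qed

lemma mixed_zero:
  fixes G :: "'n::finite reaction set"
  assumes fin: "finite G" and a: "a \<in> InjS G" and Pa: "det_product a > 0"
    and b: "b \<in> InjS G" and Pb: "det_product b < 0"
  shows "\<exists>\<kappa>. (\<forall>r\<in>G. \<kappa> r > 0) \<and> Fk G det_product \<kappa> = 0"
proof -
  obtain \<kappa>1 where k1: "\<forall>r\<in>G. \<kappa>1 r > 0" "Fk G det_product \<kappa>1 > 0"
  proof -
    have "\<forall>f\<in>InjS G. range f = range a \<longrightarrow> det_product f = det_product a"
      using dp_inv a by (auto simp: InjS_def)
    thus ?thesis using pos_witness[where P=det_product, OF fin a Pa] that by blast
  qed
  obtain \<kappa>2 where k2: "\<forall>r\<in>G. \<kappa>2 r > 0" "Fk G (\<lambda>f. - det_product f) \<kappa>2 > 0"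
  proof -
    have "\<forall>f\<in>InjS G. range f = range b \<longrightarrow> - det_product f = - det_product b"
      using dp_inv b by (auto simp: InjS_def)
    moreover have "- det_product b > 0" using Pb by simp
    ultimately show ?thesis using pos_witness[where P="\<lambda>f. - det_product f", OF fin b] that by blast
  qed
  define g where "g t = Fk G det_product (\<lambda>r. (1 - t) * \<kappa>1 r + t * \<kappa>2 r)" for t
  have g0: "g 0 = Fk G det_product \<kappa>1" by (simp add: g_def)
  have g1: "g 1 = Fk G det_product \<kappa>2" by (simp add: g_def)
  have cont: "continuous_on {0..1} g" unfolding g_def Fk_def by (intro continuous_intros)
  obtain t where t: "0 \<le> t" "t \<le> 1" "g t = 0"
    using IVT2'[of g 1 0 0, OF _ _ _ cont] g0 g1 k1 k2 Fk_neg[of G det_product \<kappa>2] by auto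
  have "\<forall>r\<in>G. (1 - t) * \<kappa>1 r + t * \<kappa>2 r > 0"
  proof
    fix r assume r: "r \<in> G"
    show "(1 - t) * \<kappa>1 r + t * \<kappa>2 r > 0"
    proof (cases "t < 1")
      case True
      have "(1 - t) * \<kappa>1 r > 0" using True k1 r by simp
      moreover have "t * \<kappa>2 r \<ge> 0" using t k2 r by (simp add: less_imp_le)
      ultimately show ?thesis by linarith
    next
      case False
      hence "t = 1" using t by simp
      thus ?thesis using k2 r by simp
    qed
  qed
  moreover have "Fk G det_product (\<lambda>r. (1 - t) * \<kappa>1 r + t * \<kappa>2 r) = 0" using t g_def by simp
  ultimately show ?thesis by (intro exI[of _ "\<lambda>r. (1 - t) * \<kappa>1 r + t * \<kappa>2 r"]) blast
qed

lemma sign_main: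
  fixes G :: "'n::finite reaction set"
  assumes fin: "finite G"
  shows "(\<forall>\<kappa>. (\<forall>r\<in>G. \<kappa> r > 0) \<longrightarrow> Fk G det_product \<kappa> \<noteq> 0) \<longleftrightarrow>
    ((\<forall>\<sigma> \<tau>. inj \<sigma> \<and> \<sigma> ` UNIV \<subseteq> G \<and> inj \<tau> \<and> \<tau> ` UNIV \<subseteq> G \<and>
              det_product \<sigma> \<noteq> 0 \<and> det_product \<tau> \<noteq> 0
              \<longrightarrow> sgn (det_product \<sigma>) = sgn (det_product \<tau>)) \<and>
     (\<exists>\<sigma>. inj \<sigma> \<and> \<sigma> ` UNIV \<subseteq> G \<and> det_product \<sigma> \<noteq> 0))"
  (is "?L \<longleftrightarrow> ?SC \<and> ?EX")
proof
  assume L: ?L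
  show "?SC \<and> ?EX"
  proof
    show ?SC
    proof (intro allI impI)
      fix \<sigma> \<tau> :: "'n \<Rightarrow> 'n reaction"
      assume h: "inj \<sigma> \<and> \<sigma> ` UNIV \<subseteq> G \<and> inj \<tau> \<and> \<tau> ` UNIV \<subseteq> G \<and> det_product \<sigma> \<noteq> 0 \<and> det_product \<tau> \<noteq> 0"
      hence s: "\<sigma> \<in> InjS G" and t: "\<tau> \<in> InjS G" by (auto simp: InjS_def)
      show "sgn (det_product \<sigma>) = sgn (det_product \<tau>)"
      proof (rule ccontr)
        assume ne: "sgn (det_product \<sigma>) \<noteq> sgn (det_product \<tau>)"
        have "(det_product \<sigma> > 0 \<and> det_product \<tau> < 0) \<or> (det_product \<sigma> < 0 \<and> det_product \<tau> > 0)"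
          using h ne by (auto simp: sgn_if split: if_splits)
        thus False
          using mixed_zero[OF fin s _ t] mixed_zero[OF fin t _ s] L by blast
      qed
    qed
    show ?EX
    proof (rule ccontr)
      assume "\<not> ?EX"
      hence "\<forall>\<sigma>\<in>InjS G. det_product \<sigma> = 0" by (auto simp: InjS_def)
      hence "Fk G det_product (\<lambda>_. 1) = 0" by (simp add: Fk_def)
      thus False using L by auto
    qed
  qed
next
  assume R: "?SC \<and> ?EX"
  then obtain \<sigma> where s: "\<sigma> \<in> InjS G" and Ps: "det_product \<sigma> \<noteq> 0" by (auto simp: InjS_def)
  have sc: "\<forall>f\<in>InjS G. det_product f \<noteq> 0 \<longrightarrow> sgn (det_product f) = sgn (det_product \<sigma>)"
    using R s Ps by (auto simp: InjS_def)
  show ?L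
  proof (intro allI impI)
    fix \<kappa> :: "'n reaction \<Rightarrow> real" assume kp: "\<forall>r\<in>G. \<kappa> r > 0"
    show "Fk G det_product \<kappa> \<noteq> 0"
    proof (cases "det_product \<sigma> > 0")
      case True
      have "\<forall>f\<in>InjS G. det_product f \<ge> 0"
      proof
        fix f assume f: "f \<in> InjS G"
        show "det_product f \<ge> 0"
        proof (rule ccontr)
          assume "\<not> det_product f \<ge> 0"
          thus False using sc f True by (auto simp: sgn_if split: if_splits)
        qed
      qed
      thus ?thesis using pos_all[where P=det_product, OF fin s True _ kp] by auto
    next
      case False
      hence neg: "- det_product \<sigma> > 0" using Ps by simp
      have "\<forall>f\<in>InjS G. - det_product f \<ge> 0"
      proof
        fix f assume f: "f \<in> InjS G"
        show "- det_product f \<ge> 0"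
        proof (rule ccontr)
          assume "\<not> - det_product f \<ge> 0"
          thus False using sc f neg by (auto simp: sgn_if split: if_splits)
        qed
      qed
      hence "Fk G (\<lambda>f. - det_product f) \<kappa> > 0" using pos_all[where P="\<lambda>f. - det_product f", OF fin s neg _ kp] by auto
      thus ?thesis using Fk_neg[of G det_product \<kappa>] by auto
    qed
  qed
qed

theorem corollary2p2:
  fixes G :: "'n::finite reaction set"
  assumes "reaction_network G"
  shows "injective_network G \<longleftrightarrow>
    ((\<forall>\<sigma> \<tau>. inj \<sigma> \<and> \<sigma> ` UNIV \<subseteq> G \<and> inj \<tau> \<and> \<tau> ` UNIV \<subseteq> G \<and>
              det_product \<sigma> \<noteq> 0 \<and> det_product \<tau> \<noteq> 0
              \<longrightarrow> sgn (det_product \<sigma>) = sgn (det_product \<tau>)) \<and>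
     (\<exists>\<sigma>. inj \<sigma> \<and> \<sigma> ` UNIV \<subseteq> G \<and> det_product \<sigma> \<noteq> 0))"
proof -
  have fin: "finite G" using assms by (simp add: reaction_network_def)
  have c: "card {p. p permutes (UNIV::'n set)} \<noteq> 0"
  proof -
    have "id \<in> {p. p permutes (UNIV::'n set)}" by (simp add: permutes_id)
    thus ?thesis using finite_permutations[of "UNIV::'n set"] by (metis card_0_eq empty_iff finite)
  qed
  have "\<And>\<kappa>. det (Mk G \<kappa>) \<noteq> 0 \<longleftrightarrow> Fk G det_product \<kappa> \<noteq> 0"
    using det_expand2[OF fin] c by (metis mult_eq_0_iff of_nat_eq_0_iff)
  hence "injective_network G \<longleftrightarrow> (\<forall>\<kappa>. (\<forall>r\<in>G. \<kappa> r > 0) \<longrightarrow> Fk G det_product \<kappa> \<noteq> 0)"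
    using inj_iff_det[of G] by simp
  thus ?thesis using sign_main[OF fin] by simp
qed


end
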